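(* For integers $m\ge1$, $1\le i\le m$ and $n\ge0$, $$\sum_{\lambda\vdash n}X_{m,i}(\lambda)=\sum_{k\ge1}p(n-k)\sum_{d\mid k}\left\lfloor\frac{d+m-i}{m}\right\rfloor,$$ where the left sum is over all partitions $\lambda$ of $n$, $p$ is the partition function, and $p(N)=0$ for $N<0$.
   Context: For a partition $\lambda:\ n=\lambda_1+\dots+\lambda_k$ with $\lambda_1\ge\dots\ge\lambda_k\ge1$, $X_{m,i}(\lambda)=\sum_{j\equiv i\pmod m}\lambda_j$, the sum of the parts whose index is congruent to $i$ modulo $m$. *)

theory Defs
  imports Main
begin

text \<open>A partition of n: a list of positive parts in nonincreasing order
  (lambda_1 >= lambda_2 >= ... >= lambda_k >= 1) summing to n.
  List position j (0-based) holds part lambda_(j+1).\<close>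
definition is_partition :: "nat \<Rightarrow> nat list \<Rightarrow> bool" where
  "is_partition n xs \<longleftrightarrow> sorted_wrt (\<ge>) xs \<and> (\<forall>x\<in>set xs. 1 \<le> x) \<and> sum_list xs = n"

definition partitions :: "nat \<Rightarrow> nat list set" where
  "partitions n = {xs. is_partition n xs}"

definition part_count :: "nat \<Rightarrow> nat" where
  "part_count n = card (partitions n)"

definition p_int :: "int \<Rightarrow> nat" where
  "p_int N = (if N < 0 then 0 else part_count (nat N))"

definition X :: "nat \<Rightarrow> nat \<Rightarrow> nat list \<Rightarrow> nat" where
  "X m i xs = (\<Sum>j\<in>{j. 1 \<le> j \<and> j \<le> length xs \<and> j mod m = i mod m}. xs ! (j - 1))"

end

theory Submission
  imports Defs "HOL-Library.Multiset"
begin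


definition cnt :: "nat list \<Rightarrow> nat \<Rightarrow> nat" where
  "cnt xs t = length (filter (\<lambda>x. t < x) xs)"

definition nth0 :: "nat list \<Rightarrow> nat \<Rightarrow> nat" where
  "nth0 xs a = (if a < length xs then xs ! a else 0)"

definition conj :: "nat list \<Rightarrow> nat list" where
  "conj xs = map (cnt xs) [0..<(if xs = [] then 0 else hd xs)]"

lemma cnt_Cons: "cnt (x # xs) t = (if t < x then Suc (cnt xs t) else cnt xs t)"
  by (simp add: cnt_def)

lemma cnt_zero: "\<forall>y\<in>set xs. y \<le> t \<Longrightarrow> cnt xs t = 0"
  by (auto simp: cnt_def filter_empty_conv)

lemma nth0_Cons: "nth0 (x#xs) 0 = x" "nth0 (x#xs) (Suc b) = nth0 xs b"
  by (auto simp: nth0_def)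

lemma key: "sorted_wrt (\<ge>) xs \<Longrightarrow> (t < nth0 xs a \<longleftrightarrow> a < cnt xs t)"
proof (induction xs arbitrary: a)
  case Nil then show ?case by (simp add: nth0_def cnt_def)
next
  case (Cons x xs)
  show ?case
  proof (cases "t < x")
    case True
    have s: "sorted_wrt (\<ge>) xs" using Cons.prems by simp
    show ?thesis
    proof (cases a)
      case 0 then show ?thesis using True by (simp add: nth0_Cons cnt_Cons)
    next
      case (Suc b) then show ?thesis using True Cons.IH[OF s, of b] by (simp add: nth0_Cons cnt_Cons)
    qed
  next
    case False
    then have "cnt xs t = 0" using Cons.prems by (intro cnt_zero) auto
    moreover have "nth0 (x#xs) a \<le> x"
    proof (cases a)
      case (Suc b)
      have "nth0 xs b \<le> x"
      proof (cases "b < length xs")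
        case True
        then have "xs ! b \<in> set xs" by (rule nth_mem)
        then show ?thesis using True Cons.prems by (simp add: nth0_def)
      qed (simp add: nth0_def)
      then show ?thesis using Suc by (simp add: nth0_Cons)
    qed (simp add: nth0_Cons)
    then have "\<not> t < nth0 (x#xs) a" using False by linarith
    ultimately show ?thesis using False by (simp add: cnt_Cons)
  qed
qed

lemma nth0_conj: "sorted_wrt (\<ge>) xs \<Longrightarrow> nth0 (conj xs) t = cnt xs t"
proof (cases xs)
  case Nil then show ?thesis by (simp add: nth0_def conj_def cnt_def)
next
  case (Cons x ys)
  assume s: "sorted_wrt (\<ge>) xs"
  show ?thesis
  proof (cases "t < x")
    case True then show ?thesis using Cons by (simp add: nth0_def conj_def)
  next
    case False
    then have "cnt xs t = 0" using s Cons by (intro cnt_zero) auto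
    then show ?thesis using False Cons by (simp add: nth0_def conj_def)
  qed
qed

lemma key2: "sorted_wrt (\<ge>) xs \<Longrightarrow> (t < nth0 xs a \<longleftrightarrow> a < nth0 (conj xs) t)"
  by (simp add: key nth0_conj)

lemma cnt_anti: "t \<le> u \<Longrightarrow> cnt xs u \<le> cnt xs t"
  unfolding cnt_def by (induction xs) auto

lemma conj_sorted: "sorted_wrt (\<ge>) (conj xs)"
  unfolding conj_def sorted_wrt_map sorted_wrt_iff_nth_less by (simp add: cnt_anti)

lemma conj_pos: "x \<in> set (conj xs) \<Longrightarrow> 1 \<le> x"
  unfolding conj_def cnt_def by (cases xs) auto

lemma nat_eqI_less: "(\<And>t::nat. t < u \<longleftrightarrow> t < v) \<Longrightarrow> u = v"
  by (metis linorder_neqE_nat less_irrefl)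

lemma nth0_pos: "\<forall>x\<in>set xs. 1 \<le> x \<Longrightarrow> (a < length xs \<longleftrightarrow> 0 < nth0 xs a)"
proof (cases "a < length xs")
  case True
  assume A: "\<forall>x\<in>set xs. 1 \<le> x"
  have "xs ! a \<in> set xs" using True by (rule nth_mem)
  then have "1 \<le> xs ! a" using A by blast
  then show ?thesis using True by (simp add: nth0_def)
qed (simp add: nth0_def)

lemma nth0_eq_list:
  assumes "\<forall>x\<in>set xs. 1 \<le> x" "\<forall>x\<in>set ys. 1 \<le> x" "\<And>a. nth0 xs a = nth0 ys a"
  shows "xs = ys"
proof -
  have "length xs = length ys"
    by (rule nat_eqI_less) (simp only: nth0_pos[OF assms(1)] nth0_pos[OF assms(2)] assms(3))
  moreover have "xs ! a = ys ! a" if "a < length xs" for a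
    using assms(3)[of a] that calculation by (simp add: nth0_def)
  ultimately show ?thesis by (rule nth_equalityI)
qed

lemma conj_conj:
  assumes "sorted_wrt (\<ge>) xs" "\<forall>x\<in>set xs. 1 \<le> x"
  shows "conj (conj xs) = xs"
proof (rule nth0_eq_list)
  show "\<forall>x\<in>set (conj (conj xs)). 1 \<le> x" using conj_pos by blast
  show "\<forall>x\<in>set xs. 1 \<le> x" by fact
  fix a
  show "nth0 (conj (conj xs)) a = nth0 xs a"
  proof (rule nat_eqI_less)
    fix t
    show "t < nth0 (conj (conj xs)) a \<longleftrightarrow> t < nth0 xs a"
      by (simp only: key2[OF assms(1), of t a] key2[OF conj_sorted[of xs], of a t])
  qed
qed

lemma sum_list_card: "sum_list ys = card {(a,t). t < nth0 ys a}"
proof -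
  have "{(a,t). t < nth0 ys a} = (SIGMA a:{..<length ys}. {..<ys!a})"
    by (auto simp: nth0_def split: if_splits)
  then show ?thesis by (simp add: sum_list_sum_nth atLeast0LessThan)
qed

lemma conj_sum:
  assumes "sorted_wrt (\<ge>) xs"
  shows "sum_list (conj xs) = sum_list xs"
proof -
  have "{(a,t). t < nth0 (conj xs) a} = {(a,t). a < nth0 xs t}"
    using key2[OF assms] by blast
  also have "\<dots> = (\<lambda>(a,t). (t,a)) ` {(a,t). t < nth0 xs a}"
    by auto
  moreover have "inj_on (\<lambda>(a,t). (t,a)) X" for X :: "(nat\<times>nat) set" by (auto simp: inj_on_def)
  ultimately show ?thesis by (simp add: sum_list_card card_image)
qed

lemma conj_part: "is_partition n xs \<Longrightarrow> is_partition n (conj xs)"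
  unfolding is_partition_def using conj_sorted conj_pos conj_sum by auto

lemma conj_bij: "bij_betw conj (partitions n) (partitions n)"
proof (rule bij_betw_byWitness[where f'=conj])
  show "\<forall>a\<in>partitions n. conj (conj a) = a"
    by (auto simp: partitions_def conj_conj is_partition_def)
  then show "\<forall>a\<in>partitions n. conj (conj a) = a" .
  show "conj ` partitions n \<subseteq> partitions n" by (auto simp: partitions_def conj_part)
  then show "conj ` partitions n \<subseteq> partitions n" .
qed



lemma mod_shift:
  fixes x m i :: nat
  assumes "0 < m" "i \<le> m"
  shows "(x + (m - i)) mod m = 0 \<longleftrightarrow> x mod m = i mod m"
proof
  assume h: "(x + (m - i)) mod m = 0"
  have "x + m = (x + (m - i)) + i" using assms by simp
  then have "(x + m) mod m = ((x + (m - i)) mod m + i) mod m" by (metis mod_add_left_eq)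
  then show "x mod m = i mod m" using h by simp
next
  assume h: "x mod m = i mod m"
  have "(x + (m - i)) mod m = (x mod m + (m - i)) mod m" by (simp add: mod_add_left_eq)
  also have "\<dots> = (i mod m + (m - i)) mod m" using h by simp
  also have "\<dots> = (i + (m - i)) mod m" by (simp add: mod_add_left_eq)
  also have "\<dots> = 0" using assms by simp
  finally show "(x + (m - i)) mod m = 0" .
qed

lemma g_card:
  fixes m i L :: nat
  assumes "1 \<le> i" "i \<le> m"
  shows "card {j. 1 \<le> j \<and> j \<le> L \<and> j mod m = i mod m} = (L + m - i) div m"
proof (induction L)
  case 0
  have "{j::nat. 1 \<le> j \<and> j \<le> 0 \<and> j mod m = i mod m} = {}" by auto
  moreover have "(0 + m - i) div m = 0" using assms by simp
  ultimately show ?case by simp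
next
  case (Suc L)
  have m0: "0 < m" using assms by simp
  have eq: "{j. 1 \<le> j \<and> j \<le> Suc L \<and> j mod m = i mod m} =
    {j. 1 \<le> j \<and> j \<le> L \<and> j mod m = i mod m} \<union>
    (if Suc L mod m = i mod m then {Suc L} else {})" by (auto simp: le_Suc_eq)
  have fin: "finite {j. 1 \<le> j \<and> j \<le> L \<and> j mod m = i mod m}" by simp
  have a: "Suc L + m - i = Suc (L + (m - i))" "L + m - i = L + (m - i)" using assms by auto
  have "Suc (L + (m - i)) mod m = 0 \<longleftrightarrow> Suc L mod m = i mod m"
    using mod_shift[OF m0 assms(2), of "Suc L"] by simp
  then show ?case
    unfolding eq a using Suc.IH fin a(2) by (auto simp: div_Suc card_insert_if)
qed

definition gg :: "nat \<Rightarrow> nat \<Rightarrow> nat \<Rightarrow> nat" where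
  "gg m i L = (L + m - i) div m"

lemma X_conj:
  assumes P: "is_partition n lam" and i: "1 \<le> i" "i \<le> m"
  shows "X m i lam = sum_list (map (gg m i) (conj lam))"
proof -
  define c where "c = conj lam"
  define J where "J = {j. 1 \<le> j \<and> j \<le> length lam \<and> j mod m = i mod m}"
  define K where "K = (\<lambda>L. {j::nat. 1 \<le> j \<and> j \<le> L \<and> j mod m = i mod m})"
  have s: "sorted_wrt (\<ge>) lam" using P by (simp add: is_partition_def)
  have finJ: "finite J" unfolding J_def by simp
  have "X m i lam = (\<Sum>j\<in>J. card {..< lam ! (j - 1)})" by (simp add: X_def J_def)
  also have "\<dots> = card (SIGMA j:J. {..< lam ! (j - 1)})" using finJ by simp
  finally have L1: "X m i lam = card (SIGMA j:J. {..< lam ! (j - 1)})" .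
  have "sum_list (map (gg m i) c) = (\<Sum>t<length c. gg m i (c ! t))"
    by (simp add: sum_list_sum_nth atLeast0LessThan)
  also have "\<dots> = (\<Sum>t<length c. card (K (c ! t)))"
    using g_card[OF i] by (simp add: gg_def K_def)
  also have "\<dots> = card (SIGMA t:{..<length c}. K (c ! t))" by (simp add: K_def)
  finally have L2: "sum_list (map (gg m i) c) = card (SIGMA t:{..<length c}. K (c ! t))" .
  have S1: "(SIGMA j:J. {..< lam ! (j - 1)}) = {(j,t). 1 \<le> j \<and> j mod m = i mod m \<and> t < nth0 lam (j - 1)}"
    by (auto simp: J_def nth0_def split: if_splits)
  have S2: "(SIGMA t:{..<length c}. K (c ! t)) = {(t,j). 1 \<le> j \<and> j mod m = i mod m \<and> j - 1 < nth0 c t}"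
    by (auto simp: K_def nth0_def split: if_splits)
  have S3: "{(t,j). 1 \<le> j \<and> j mod m = i mod m \<and> j - 1 < nth0 c t}
     = (\<lambda>(j,t). (t,j)) ` {(j,t). 1 \<le> j \<and> j mod m = i mod m \<and> t < nth0 lam (j - 1)}"
  proof -
    have "{(t,j). 1 \<le> j \<and> j mod m = i mod m \<and> j - 1 < nth0 c t}
      = {(t,j). 1 \<le> j \<and> j mod m = i mod m \<and> t < nth0 lam (j - 1)}"
      unfolding c_def using key2[OF s] by blast
    also have "\<dots> = (\<lambda>(j,t). (t,j)) ` {(j,t). 1 \<le> j \<and> j mod m = i mod m \<and> t < nth0 lam (j - 1)}"
      by auto
    finally show ?thesis .
  qed
  have inj: "inj_on (\<lambda>(j::nat,t::nat). (t,j)) Y" for Y by (auto simp: inj_on_def)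
  show ?thesis unfolding L1 c_def[symmetric] L2 S1 S2 S3 by (simp add: card_image inj)
qed



lemma length_le_sum: "\<forall>x\<in>set xs. (1::nat) \<le> x \<Longrightarrow> length xs \<le> sum_list xs"
  by (induction xs) auto

lemma finite_partitions: "finite (partitions n)"
proof (rule finite_subset)
  show "partitions n \<subseteq> {xs. set xs \<subseteq> {0..n} \<and> length xs \<le> n}"
  proof
    fix xs assume "xs \<in> partitions n"
    then have h: "\<forall>x\<in>set xs. 1 \<le> x" "sum_list xs = n" by (auto simp: partitions_def is_partition_def)
    have "set xs \<subseteq> {0..n}" using member_le_sum_list h(2) by fastforce
    moreover have "length xs \<le> n" using length_le_sum[OF h(1)] h(2) by simp
    ultimately show "xs \<in> {xs. set xs \<subseteq> {0..n} \<and> length xs \<le> n}" by simp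
  qed
  show "finite {xs. set xs \<subseteq> {0..n} \<and> length xs \<le> n}" by (rule finite_lists_length_le) simp
qed

lemma sorted_mset_eq:
  assumes "sorted_wrt (\<ge>) xs" "sorted_wrt (\<ge>) ys" "mset xs = mset (ys::nat list)"
  shows "xs = ys"
proof -
  have "sorted (rev xs)" "sorted (rev ys)" using assms(1,2) by (simp_all add: sorted_wrt_rev)
  moreover have "mset (rev xs) = mset (rev ys)" using assms(3) by simp
  ultimately have "rev xs = rev ys" by (metis properties_for_sort)
  then show ?thesis by simp
qed

lemma count_mul_le: "count_list xs d * d \<le> sum_list (xs::nat list)"
  by (induction xs) auto

definition addc :: "nat \<Rightarrow> nat \<Rightarrow> nat list \<Rightarrow> nat list" where
  "addc c d nu = rev (sort (replicate c d @ nu))"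

definition remc :: "nat \<Rightarrow> nat \<Rightarrow> nat list \<Rightarrow> nat list" where
  "remc c d mu = rev (sorted_list_of_multiset (mset mu - replicate_mset c d))"

lemma lemA:
  assumes d: "1 \<le> d" and dc: "d * c \<le> n"
  shows "card {mu \<in> partitions n. c \<le> count_list mu d} = part_count (n - d * c)"
proof -
  let ?A = "partitions (n - d * c)"
  let ?S = "{mu \<in> partitions n. c \<le> count_list mu d}"
  have bij: "bij_betw (addc c d) ?A ?S"
  proof (rule bij_betw_byWitness[where f' = "remc c d"])
    show "\<forall>a\<in>?A. remc c d (addc c d a) = a"
    proof
      fix a assume "a \<in> ?A"
      then have s: "sorted_wrt (\<ge>) a" by (simp add: partitions_def is_partition_def)
      have "mset (remc c d (addc c d a)) = mset a" by (simp add: remc_def addc_def)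
      moreover have "sorted_wrt (\<ge>) (remc c d (addc c d a))"
        by (simp add: remc_def sorted_wrt_rev)
      ultimately show "remc c d (addc c d a) = a" using s sorted_mset_eq by blast
    qed
    show "\<forall>a\<in>?S. addc c d (remc c d a) = a"
    proof
      fix a assume "a \<in> ?S"
      then have s: "sorted_wrt (\<ge>) a" and cn: "c \<le> count_list a d"
        by (simp_all add: partitions_def is_partition_def)
      have "mset (addc c d (remc c d a)) = replicate_mset c d + (mset a - replicate_mset c d)"
        by (simp add: remc_def addc_def)
      also have "\<dots> = mset a"
        by (rule multiset_eqI) (use cn in \<open>auto simp: count_mset\<close>)
      finally have "mset (addc c d (remc c d a)) = mset a" .
      moreover have "sorted_wrt (\<ge>) (addc c d (remc c d a))"
        by (simp add: addc_def sorted_wrt_rev)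
      ultimately show "addc c d (remc c d a) = a" using s sorted_mset_eq by blast
    qed
    show "addc c d ` ?A \<subseteq> ?S"
    proof
      fix x assume "x \<in> addc c d ` ?A"
      then obtain a where a: "a \<in> ?A" "x = addc c d a" by blast
      then have h: "\<forall>y\<in>set a. 1 \<le> y" "sum_list a = n - d * c"
        by (simp_all add: partitions_def is_partition_def)
      have ms: "mset x = replicate_mset c d + mset a" using a(2) by (simp add: addc_def)
      have "sorted_wrt (\<ge>) x" using a(2) by (simp add: addc_def sorted_wrt_rev)
      moreover have "\<forall>y\<in>set x. 1 \<le> y"
      proof
        fix y assume "y \<in> set x"
        then have "y \<in># mset x" by simp
        then have "y = d \<or> y \<in> set a" unfolding ms by (auto split: if_splits)
        then show "1 \<le> y" using h d by auto
      qed
      moreover have "sum_list x = n"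
      proof -
        have "sum_list x = sum_mset (mset x)" by (simp add: sum_mset_sum_list)
        also have "\<dots> = c * d + sum_list a" unfolding ms by (simp add: sum_mset_sum_list)
        finally show ?thesis using h(2) dc by (simp add: mult.commute)
      qed
      moreover have "c \<le> count_list x d"
        using ms by (simp flip: count_mset)
      ultimately show "x \<in> ?S" by (simp add: partitions_def is_partition_def)
    qed
    show "remc c d ` ?S \<subseteq> ?A"
    proof
      fix x assume "x \<in> remc c d ` ?S"
      then obtain a where a: "a \<in> ?S" "x = remc c d a" by blast
      then have h: "\<forall>y\<in>set a. 1 \<le> y" "sum_list a = n" "c \<le> count_list a d"
        by (simp_all add: partitions_def is_partition_def)
      have ms: "mset x = mset a - replicate_mset c d" using a(2) by (simp add: remc_def)
      have split: "mset a = replicate_mset c d + mset x"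
        unfolding ms by (rule multiset_eqI) (use h(3) in \<open>auto simp: count_mset\<close>)
      have "sorted_wrt (\<ge>) x" using a(2) by (simp add: remc_def sorted_wrt_rev)
      moreover have "\<forall>y\<in>set x. 1 \<le> y"
      proof
        fix y assume "y \<in> set x"
        then have "y \<in># mset a" unfolding split by simp
        then show "1 \<le> y" using h(1) by simp
      qed
      moreover have "sum_list x = n - d * c"
      proof -
        have "n = sum_mset (mset a)" using h(2) by (simp add: sum_mset_sum_list)
        also have "\<dots> = c * d + sum_list x" unfolding split by (simp add: sum_mset_sum_list)
        finally show ?thesis by (simp add: mult.commute)
      qed
      ultimately show "x \<in> ?A" by (simp add: partitions_def is_partition_def)
    qed
  qed
  then have "card ?A = card ?S" by (rule bij_betw_same_card)
  then show ?thesis by (simp add: part_count_def)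
qed



lemma count_le_div:
  assumes "mu \<in> partitions n" "1 \<le> d"
  shows "count_list mu d \<le> n div d"
proof -
  have "count_list mu d * d \<le> n" using count_mul_le[of mu d] assms(1)
    by (simp add: partitions_def is_partition_def)
  then have "count_list mu d * d div d \<le> n div d" by (rule div_le_mono)
  then show ?thesis using assms(2) by simp
qed

lemma count_sum:
  assumes d: "1 \<le> d"
  shows "(\<Sum>mu\<in>partitions n. count_list mu d) = (\<Sum>c\<in>{1..n div d}. part_count (n - d * c))"
proof -
  have "(\<Sum>mu\<in>partitions n. count_list mu d)
      = (\<Sum>mu\<in>partitions n. \<Sum>c\<in>{1..n div d}. if c \<le> count_list mu d then 1 else 0)"
  proof (rule sum.cong)
    fix mu assume mu: "mu \<in> partitions n"
    have "{c \<in> {1..n div d}. c \<le> count_list mu d} = {1..count_list mu d}"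
      using count_le_div[OF mu d] by auto
    then have "count_list mu d = card {c \<in> {1..n div d}. c \<le> count_list mu d}" by simp
    also have "\<dots> = (\<Sum>c\<in>{1..n div d}. if c \<le> count_list mu d then 1 else 0)"
      by (simp add: sum.inter_filter[symmetric])
    finally show "count_list mu d = (\<Sum>c\<in>{1..n div d}. if c \<le> count_list mu d then 1 else 0)" .
  qed simp
  also have "\<dots> = (\<Sum>c\<in>{1..n div d}. \<Sum>mu\<in>partitions n. if c \<le> count_list mu d then 1 else 0)"
    by (rule sum.swap)
  also have "\<dots> = (\<Sum>c\<in>{1..n div d}. part_count (n - d * c))"
  proof (rule sum.cong)
    fix c assume c: "c \<in> {1..n div d}"
    then have "c * d \<le> n div d * d" by simp
    also have "\<dots> \<le> n" by simp
    finally have dc: "d * c \<le> n" by (simp add: mult.commute)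
    have "(\<Sum>mu\<in>partitions n. if c \<le> count_list mu d then 1 else 0)
        = card {mu \<in> partitions n. c \<le> count_list mu d}"
      using finite_partitions by (simp add: sum.inter_filter[symmetric])
    also have "\<dots> = part_count (n - d * c)" by (rule lemA[OF d dc])
    finally show "(\<Sum>mu\<in>partitions n. if c \<le> count_list mu d then 1 else 0) = part_count (n - d * c)" .
  qed simp
  finally show ?thesis .
qed

lemma sumlist_eq:
  assumes "mu \<in> partitions n"
  shows "sum_list (map f mu) = (\<Sum>d\<in>{1..n}. count_list mu d * f d)"
proof -
  have h: "\<forall>y\<in>set mu. 1 \<le> y" "sum_list mu = n" using assms by (simp_all add: partitions_def is_partition_def)
  have sub: "set mu \<subseteq> {1..n}" using h member_le_sum_list by fastforce
  have "sum_list (map f mu) = (\<Sum>d\<in>set mu. count_list mu d * f d)" by (rule sum_list_map_eq_sum_count)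
  also have "\<dots> = (\<Sum>d\<in>{1..n}. count_list mu d * f d)"
    by (rule sum.mono_neutral_left) (use sub in \<open>auto simp: count_list_0_iff\<close>)
  finally show ?thesis .
qed

theorem mainTheorem8:
  fixes m i n :: nat
  assumes "1 \<le> m" and "1 \<le> i" and "i \<le> m"
  shows "(\<Sum>lam\<in>partitions n. X m i lam)
       = (\<Sum>k\<in>{1..n}. p_int (int n - int k) *
            (\<Sum>d\<in>{d. d dvd k}. (d + m - i) div m))"
proof -
  let ?g = "gg m i"
  let ?Q = "\<lambda>d. (\<Sum>c\<in>{1..n div d}. part_count (n - d * c))"
  have "(\<Sum>lam\<in>partitions n. X m i lam) = (\<Sum>lam\<in>partitions n. sum_list (map ?g (conj lam)))"
    by (rule sum.cong) (use X_conj assms(2,3) in \<open>auto simp: partitions_def\<close>)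
  also have "\<dots> = (\<Sum>mu\<in>partitions n. sum_list (map ?g mu))"
    by (rule sum.reindex_bij_betw[OF conj_bij])
  also have "\<dots> = (\<Sum>mu\<in>partitions n. \<Sum>d\<in>{1..n}. count_list mu d * ?g d)"
    by (rule sum.cong) (simp_all add: sumlist_eq)
  also have "\<dots> = (\<Sum>d\<in>{1..n}. \<Sum>mu\<in>partitions n. count_list mu d * ?g d)"
    by (rule sum.swap)
  also have "\<dots> = (\<Sum>d\<in>{1..n}. ?g d * ?Q d)"
    by (rule sum.cong) (simp_all add: count_sum sum_distrib_right[symmetric] mult.commute)
  finally have LHS: "(\<Sum>lam\<in>partitions n. X m i lam) = (\<Sum>d\<in>{1..n}. ?g d * ?Q d)" .
  define A where "A = Sigma {1..n} (\<lambda>k. {d::nat. d dvd k})"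
  define B where "B = Sigma {1..n} (\<lambda>d. {1..n div d})"
  define h where "h = (\<lambda>(d::nat, c::nat). (d * c, d))"
  have "(\<Sum>k\<in>{1..n}. p_int (int n - int k) * (\<Sum>d\<in>{d. d dvd k}. (d + m - i) div m))
      = (\<Sum>k\<in>{1..n}. \<Sum>d\<in>{d. d dvd k}. part_count (n - k) * ?g d)"
    by (rule sum.cong) (auto simp: p_int_def gg_def sum_distrib_left nat_diff_distrib)
  also have "\<dots> = (\<Sum>(k,d)\<in>A. part_count (n - k) * ?g d)"
    unfolding A_def by (rule sum.Sigma) auto
  finally have R1: "(\<Sum>k\<in>{1..n}. p_int (int n - int k) * (\<Sum>d\<in>{d. d dvd k}. (d + m - i) div m))
      = (\<Sum>(k,d)\<in>A. part_count (n - k) * ?g d)" .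
  have hAB: "A = h ` B"
  proof
    show "h ` B \<subseteq> A"
    proof
      fix x assume "x \<in> h ` B"
      then obtain d c where dc: "d \<in> {1..n}" "c \<in> {1..n div d}" "x = (d * c, d)"
        unfolding B_def h_def by auto
      then have "c * d \<le> n div d * d" by simp
      also have "\<dots> \<le> n" by simp
      finally have "d * c \<le> n" by (simp add: mult.commute)
      moreover have "1 \<le> d * c" using dc by simp
      ultimately show "x \<in> A" using dc unfolding A_def by auto
    qed
    show "A \<subseteq> h ` B"
    proof
      fix x assume "x \<in> A"
      then obtain k d where kd: "k \<in> {1..n}" "d dvd k" "x = (k, d)" unfolding A_def by auto
      then obtain c where c: "k = d * c" by (auto simp: dvd_def)
      have "d \<noteq> 0" "c \<noteq> 0" using kd c by auto
      then have "d \<le> k" "c \<le> k div d" using c by auto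
      moreover have "k div d \<le> n div d" using kd by (simp add: div_le_mono)
      ultimately have "(d, c) \<in> B" unfolding B_def using kd \<open>d \<noteq> 0\<close> \<open>c \<noteq> 0\<close> by auto
      moreover have "x = h (d, c)" using kd c by (simp add: h_def)
      ultimately show "x \<in> h ` B" by blast
    qed
  qed
  have inj: "inj_on h B" unfolding inj_on_def B_def h_def by auto
  have R: "(\<Sum>(k,d)\<in>h ` B. part_count (n - k) * ?g d) = (\<Sum>(d,c)\<in>B. part_count (n - d * c) * ?g d)"
    by (subst sum.reindex[OF inj]) (simp add: h_def case_prod_beta comp_def)
  also have "\<dots> = (\<Sum>d\<in>{1..n}. \<Sum>c\<in>{1..n div d}. part_count (n - d * c) * ?g d)"
    unfolding B_def by (rule sum.Sigma[symmetric]) auto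
  also have "\<dots> = (\<Sum>d\<in>{1..n}. ?g d * ?Q d)"
    by (simp add: sum_distrib_left mult.commute)
  finally have R2: "(\<Sum>(k,d)\<in>h ` B. part_count (n - k) * ?g d) = (\<Sum>d\<in>{1..n}. ?g d * ?Q d)" .
  show ?thesis unfolding LHS R1 hAB R2 ..
qed

end
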